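(* Let $\Phi$ be an $N\times\mathcal{C}$ complex matrix with columns $\varphi_1,\dots,\varphi_{\mathcal{C}}$ (entries $\varphi_j(x)$, $x=1,\dots,N$) such that (i) $\sum_{j=1}^{\mathcal{C}}\varphi_j(x)\overline{\varphi_j(y)}=0$ whenever $x\neq y$, (ii) $\sum_{j=1}^{\mathcal{C}}\varphi_j(x)=0$ for all $x$, and (iii) the columns of $\Phi$ form a group under pointwise multiplication. Then the normalized columns $(N^{-1/2}\varphi_j)_{j=1,\dots,\mathcal{C}}$ form a tight frame in $\mathbb{C}^N$ with redundancy $\mathcal{C}/N$; that is, for every $v\in\mathbb{C}^N$, $\sum_{j=1}^{\mathcal{C}}|\langle v,N^{-1/2}\varphi_j\rangle|^2=\frac{\mathcal{C}}{N}\|v\|^2$.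
   Context: "The columns form a group under pointwise multiplication" means: for all $j,j'$ there is $j''$ with $\varphi_j(x)\varphi_{j'}(x)=\varphi_{j''}(x)$ for all $x$, and the set of columns is a group under this operation (its identity being the all-ones column). $\Phi$ is assumed to have no repeated columns. $\|\cdot\|$ is the Euclidean norm and $\langle\cdot,\cdot\rangle$ the standard Hermitian inner product. *)

theory Defs
  imports Complex_Main "HOL-Algebra.Group"
begin

text \<open>Vectors in C^N are functions nat => complex, read on the index set {1..N}.
 The columns of the N x C matrix Phi are phi 1, ..., phi C, with entries phi j x, x in {1..N}.\<close>

definition column :: "nat \<Rightarrow> (nat \<Rightarrow> nat \<Rightarrow> complex) \<Rightarrow> nat \<Rightarrow> (nat \<Rightarrow> complex)" where
  "column N \<phi> j = (\<lambda>x\<in>{1..N}. \<phi> j x)"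

definition columns :: "nat \<Rightarrow> nat \<Rightarrow> (nat \<Rightarrow> nat \<Rightarrow> complex) \<Rightarrow> (nat \<Rightarrow> complex) set" where
  "columns N C \<phi> = column N \<phi> ` {1..C}"

definition column_monoid :: "nat \<Rightarrow> nat \<Rightarrow> (nat \<Rightarrow> nat \<Rightarrow> complex) \<Rightarrow> (nat \<Rightarrow> complex) monoid" where
  "column_monoid N C \<phi> =
     \<lparr> carrier = columns N C \<phi>,
       mult = (\<lambda>f g. \<lambda>x\<in>{1..N}. f x * g x),
       one = (\<lambda>x\<in>{1..N}. 1) \<rparr>"

definition herm_inner :: "nat \<Rightarrow> (nat \<Rightarrow> complex) \<Rightarrow> (nat \<Rightarrow> complex) \<Rightarrow> complex" where
  "herm_inner N v w = (\<Sum>x=1..N. v x * cnj (w x))"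

definition eucl_norm :: "nat \<Rightarrow> (nat \<Rightarrow> complex) \<Rightarrow> real" where
  "eucl_norm N v = sqrt (\<Sum>x=1..N. (cmod (v x))\<^sup>2)"

end

theory Submission
  imports Defs "HOL-Algebra.Multiplicative_Group"
begin

lemma unit_entries:
  fixes N C :: nat and \<phi> :: "nat \<Rightarrow> nat \<Rightarrow> complex"
  assumes grp: "group (column_monoid N C \<phi>)"
    and j: "j \<in> {1..C}" and x: "x \<in> {1..N}"
  shows "cmod (\<phi> j x) = 1"
proof -
  let ?G = "column_monoid N C \<phi>"
  interpret G: group ?G by (rule grp)
  have fin: "finite (carrier ?G)" by (simp add: column_monoid_def columns_def)
  have pos: "0 < order ?G" using fin G.order_gt_0_iff_finite by blast
  have mem: "column N \<phi> j \<in> carrier ?G" using j by (simp add: column_monoid_def columns_def)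
  have pw: "(column N \<phi> j [^]\<^bsub>?G\<^esub> n) x = (\<phi> j x) ^ n" for n
  proof (induction n)
    case 0 show ?case using x by (simp add: column_monoid_def)
  next
    case (Suc n)
    have xb: "Suc 0 \<le> x" "x \<le> N" using x by auto
    show ?case using Suc xb by (simp add: column_monoid_def column_def)
  qed
  have "(column N \<phi> j [^]\<^bsub>?G\<^esub> order ?G) = \<one>\<^bsub>?G\<^esub>" using G.pow_order_eq_1[OF mem] .
  then have "(\<phi> j x) ^ order ?G = 1" using pw[of "order ?G"] x by (simp add: column_monoid_def)
  then have "cmod (\<phi> j x) ^ order ?G = 1" by (metis norm_one norm_power)
  then have "cmod (\<phi> j x) ^ order ?G = 1 ^ order ?G" by simp
  then show ?thesis using pos power_eq_imp_eq_base[of "cmod (\<phi> j x)" "order ?G" 1] by simp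
qed

theorem lemma2p4:
  fixes N C :: nat and \<phi> :: "nat \<Rightarrow> nat \<Rightarrow> complex"
  assumes N_pos: "N \<ge> 1"
    and no_repeat: "inj_on (column N \<phi>) {1..C}"
    and orth: "\<And>x y. x \<in> {1..N} \<Longrightarrow> y \<in> {1..N} \<Longrightarrow> x \<noteq> y \<Longrightarrow>
                 (\<Sum>j=1..C. \<phi> j x * cnj (\<phi> j y)) = 0"
    and zero_sum: "\<And>x. x \<in> {1..N} \<Longrightarrow> (\<Sum>j=1..C. \<phi> j x) = 0"
    and grp: "group (column_monoid N C \<phi>)"
  shows "\<forall>v :: nat \<Rightarrow> complex.
           (\<Sum>j=1..C. (cmod (herm_inner N v (\<lambda>x. \<phi> j x / complex_of_real (sqrt (real N)))))\<^sup>2)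
             = real C / real N * (eucl_norm N v)\<^sup>2"
proof
  fix v :: "nat \<Rightarrow> complex"
  define s where "s = sqrt (real N)"
  have s2: "s^2 = real N" unfolding s_def by simp
  have spos: "s > 0" unfolding s_def using N_pos by simp
  define a where "a j = (\<Sum>x=1..N. v x * cnj (\<phi> j x))" for j
  have hi: "herm_inner N v (\<lambda>x. \<phi> j x / complex_of_real s) = a j / complex_of_real s" for j
    unfolding herm_inner_def a_def by (simp add: sum_divide_distrib)
  have diag: "(\<Sum>j=1..C. \<phi> j x * cnj (\<phi> j x)) = of_nat C" if x: "x \<in> {1..N}" for x
  proof -
    have "(\<Sum>j=1..C. \<phi> j x * cnj (\<phi> j x)) = (\<Sum>j=1..C. (1::complex))"
    proof (rule sum.cong)
      fix j assume "j \<in> {1..C}"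
      then have "cmod (\<phi> j x) = 1" using unit_entries[OF grp _ x] by blast
      then show "\<phi> j x * cnj (\<phi> j x) = 1"
        by (metis complex_norm_square of_real_1 one_power2)
    qed simp
    then show ?thesis by simp
  qed
  have key: "(\<Sum>j=1..C. a j * cnj (a j)) = of_nat C * (\<Sum>x=1..N. v x * cnj (v x))"
  proof -
    have "(\<Sum>j=1..C. a j * cnj (a j))
        = (\<Sum>j=1..C. \<Sum>x=1..N. \<Sum>y=1..N. (v x * cnj (v y)) * (\<phi> j y * cnj (\<phi> j x)))"
      unfolding a_def by (simp add: sum_product cnj_sum mult_ac)
    also have "\<dots> = (\<Sum>x=1..N. \<Sum>j=1..C. \<Sum>y=1..N. (v x * cnj (v y)) * (\<phi> j y * cnj (\<phi> j x)))"
      by (rule sum.swap)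
    also have "\<dots> = (\<Sum>x=1..N. \<Sum>y=1..N. \<Sum>j=1..C. (v x * cnj (v y)) * (\<phi> j y * cnj (\<phi> j x)))"
      by (rule sum.cong[OF refl], rule sum.swap)
    also have "\<dots> = (\<Sum>x=1..N. \<Sum>y=1..N. (v x * cnj (v y)) * (\<Sum>j=1..C. \<phi> j y * cnj (\<phi> j x)))"
      by (simp add: sum_distrib_left)
    also have "\<dots> = (\<Sum>x=1..N. (v x * cnj (v x)) * of_nat C)"
    proof (rule sum.cong)
      fix x assume x: "x \<in> {1..N}"
      have "(\<Sum>y=1..N. (v x * cnj (v y)) * (\<Sum>j=1..C. \<phi> j y * cnj (\<phi> j x)))
          = (\<Sum>y\<in>{1..N}. if y = x then (v x * cnj (v x)) * of_nat C else 0)"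
      proof (rule sum.cong[OF refl])
        fix y assume y: "y \<in> {1..N}"
        show "(v x * cnj (v y)) * (\<Sum>j=1..C. \<phi> j y * cnj (\<phi> j x))
             = (if y = x then (v x * cnj (v x)) * of_nat C else 0)"
        proof (cases "y = x")
          case True then show ?thesis using diag[OF x] by simp
        next
          case False then show ?thesis using orth[OF y x False] by simp
        qed
      qed
      also have "\<dots> = (v x * cnj (v x)) * of_nat C" using x by simp
      finally show "(\<Sum>y=1..N. (v x * cnj (v y)) * (\<Sum>j=1..C. \<phi> j y * cnj (\<phi> j x)))
          = (v x * cnj (v x)) * of_nat C" .
    qed simp
    finally show ?thesis by (simp add: sum_distrib_left mult_ac)
  qed
  have "complex_of_real (\<Sum>j=1..C. (cmod (a j / complex_of_real s))\<^sup>2)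
      = (\<Sum>j=1..C. a j * cnj (a j)) / of_real (s^2)"
  proof -
    have t: "complex_of_real ((cmod (a j / complex_of_real s))\<^sup>2) = a j * cnj (a j) / of_real (s^2)" for j
    proof -
      have "(cmod (a j / complex_of_real s))\<^sup>2 = (cmod (a j))\<^sup>2 / s^2"
        using spos by (simp add: norm_divide power_divide)
      then show ?thesis by (simp only: of_real_divide complex_norm_square)
    qed
    show ?thesis by (simp only: of_real_sum t sum_divide_distrib)
  qed
  also have "\<dots> = of_nat C * (\<Sum>x=1..N. v x * cnj (v x)) / of_real (real N)" using key s2 by simp
  also have "\<dots> = complex_of_real (real C / real N * (eucl_norm N v)\<^sup>2)"
  proof -
    have e: "(eucl_norm N v)\<^sup>2 = (\<Sum>x=1..N. (cmod (v x))\<^sup>2)"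
      unfolding eucl_norm_def by (simp add: sum_nonneg)
    have "complex_of_real (\<Sum>x=1..N. (cmod (v x))\<^sup>2) = (\<Sum>x=1..N. v x * cnj (v x))"
      by (simp only: of_real_sum complex_norm_square)
    then show ?thesis using e by simp
  qed
  finally have "(\<Sum>j=1..C. (cmod (a j / complex_of_real s))\<^sup>2) = real C / real N * (eucl_norm N v)\<^sup>2"
    using of_real_eq_iff by blast
  then show "(\<Sum>j=1..C. (cmod (herm_inner N v (\<lambda>x. \<phi> j x / complex_of_real (sqrt (real N)))))\<^sup>2)
             = real C / real N * (eucl_norm N v)\<^sup>2"
    using hi by (simp add: s_def)
qed

end
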